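(* For every $n\geq 3$, $$|S_n(123,132,3421)|=|S_n(123,213,3421)|=3n-5.$$
   Context: Permutations are written in one-line notation. A permutation $\sigma\in S_n$ contains $\pi\in S_m$ if there are indices $i_1<\dots<i_m$ such that for all $j<l$, $\sigma_{i_j}<\sigma_{i_l}$ iff $\pi_j<\pi_l$; otherwise $\sigma$ avoids $\pi$. $S_n(\pi^{(1)},\dots,\pi^{(r)})$ is the set of permutations in $S_n$ avoiding all the listed patterns. *)

theory Defs
  imports Main
begin

definition perms :: "nat \<Rightarrow> nat list set" where
  "perms n = {s. distinct s \<and> set s = {1..n}}"

definition contains :: "nat list \<Rightarrow> nat list \<Rightarrow> bool" where
  "contains sigma pi \<longleftrightarrow>
     (\<exists>idx :: nat \<Rightarrow> nat.
        (\<forall>j<length pi. idx j < length sigma) \<and>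
        (\<forall>j l. j < l \<and> l < length pi \<longrightarrow> idx j < idx l) \<and>
        (\<forall>j l. j < l \<and> l < length pi \<longrightarrow>
            (sigma ! idx j < sigma ! idx l \<longleftrightarrow> pi ! j < pi ! l)))"

definition avoids :: "nat list \<Rightarrow> nat list \<Rightarrow> bool" where
  "avoids sigma pi \<longleftrightarrow> \<not> contains sigma pi"

definition Av :: "nat \<Rightarrow> nat list list \<Rightarrow> nat list set" where
  "Av n pats = {s \<in> perms n. \<forall>p \<in> set pats. avoids s p}"

end

theory Submission
  imports Defs
begin


lemma contains3:
  "contains s [a,b,c] \<longleftrightarrow> (\<exists>i j k. i<j \<and> j<k \<and> k<length s \<and> (s!i<s!j \<longleftrightarrow> a<b)
      \<and> (s!i<s!k \<longleftrightarrow> a<c) \<and> (s!j<s!k \<longleftrightarrow> b<c))"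
proof
  assume "contains s [a,b,c]"
  then obtain idx where H1: "\<forall>j<length [a,b,c]. idx j < length s"
    and H2: "\<forall>j l. j<l \<and> l<length [a,b,c] \<longrightarrow> idx j < idx l"
    and H3: "\<forall>j l. j < l \<and> l < length [a,b,c] \<longrightarrow> (s!idx j < s!idx l \<longleftrightarrow> [a,b,c]!j < [a,b,c]!l)"
    unfolding contains_def by blast
  show "\<exists>i j k. i<j \<and> j<k \<and> k<length s \<and> (s!i<s!j \<longleftrightarrow> a<b)
      \<and> (s!i<s!k \<longleftrightarrow> a<c) \<and> (s!j<s!k \<longleftrightarrow> b<c)"
    apply (rule exI[of _ "idx 0"], rule exI[of _ "idx 1"], rule exI[of _ "idx 2"])
    using H1[rule_format, of 2] H2[rule_format, of 0 1] H2[rule_format, of 1 2]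
      H3[rule_format, of 0 1] H3[rule_format, of 0 2] H3[rule_format, of 1 2]
    by simp
next
  assume "\<exists>i j k. i<j \<and> j<k \<and> k<length s \<and> (s!i<s!j \<longleftrightarrow> a<b)
      \<and> (s!i<s!k \<longleftrightarrow> a<c) \<and> (s!j<s!k \<longleftrightarrow> b<c)"
  then obtain i j k where h: "i<j" "j<k" "k<length s" "(s!i<s!j \<longleftrightarrow> a<b)"
      "(s!i<s!k \<longleftrightarrow> a<c)" "(s!j<s!k \<longleftrightarrow> b<c)" by blast
  define idx where "idx = (\<lambda>t::nat. if t=0 then i else if t=1 then j else k)"
  have c: "\<And>j l::nat. j<l \<Longrightarrow> l< 3 \<Longrightarrow> (j=0\<and>l=1) \<or> (j=0\<and>l=2) \<or> (j=1\<and>l=2)" by arith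
  have c1: "\<And>j::nat. j < 3 \<Longrightarrow> j=0 \<or> j=1 \<or> j=2" by arith
  show "contains s [a,b,c]" unfolding contains_def
    apply (rule exI[of _ idx])
    using h c c1 by (auto simp: idx_def)
qed

lemma contains4:
  "contains s [a,b,c,d] \<longleftrightarrow> (\<exists>i j k l. i<j \<and> j<k \<and> k<l \<and> l<length s \<and> (s!i<s!j \<longleftrightarrow> a<b)
      \<and> (s!i<s!k \<longleftrightarrow> a<c) \<and> (s!i<s!l \<longleftrightarrow> a<d) \<and> (s!j<s!k \<longleftrightarrow> b<c)
      \<and> (s!j<s!l \<longleftrightarrow> b<d) \<and> (s!k<s!l \<longleftrightarrow> c<d))"
proof
  assume "contains s [a,b,c,d]"
  then obtain idx where H1: "\<forall>j<length [a,b,c,d]. idx j < length s"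
    and H2: "\<forall>j l. j<l \<and> l<length [a,b,c,d] \<longrightarrow> idx j < idx l"
    and H3: "\<forall>j l. j < l \<and> l < length [a,b,c,d] \<longrightarrow> (s!idx j < s!idx l \<longleftrightarrow> [a,b,c,d]!j < [a,b,c,d]!l)"
    unfolding contains_def by blast
  show "\<exists>i j k l. i<j \<and> j<k \<and> k<l \<and> l<length s \<and> (s!i<s!j \<longleftrightarrow> a<b)
      \<and> (s!i<s!k \<longleftrightarrow> a<c) \<and> (s!i<s!l \<longleftrightarrow> a<d) \<and> (s!j<s!k \<longleftrightarrow> b<c)
      \<and> (s!j<s!l \<longleftrightarrow> b<d) \<and> (s!k<s!l \<longleftrightarrow> c<d)"
    apply (rule exI[of _ "idx 0"], rule exI[of _ "idx 1"], rule exI[of _ "idx 2"], rule exI[of _ "idx 3"])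
    using H1[rule_format, of 3] H2[rule_format, of 0 1] H2[rule_format, of 1 2] H2[rule_format, of 2 3]
      H3[rule_format, of 0 1] H3[rule_format, of 0 2] H3[rule_format, of 0 3]
      H3[rule_format, of 1 2] H3[rule_format, of 1 3] H3[rule_format, of 2 3]
    by (simp add: numeral_eq_Suc)
next
  assume "\<exists>i j k l. i<j \<and> j<k \<and> k<l \<and> l<length s \<and> (s!i<s!j \<longleftrightarrow> a<b)
      \<and> (s!i<s!k \<longleftrightarrow> a<c) \<and> (s!i<s!l \<longleftrightarrow> a<d) \<and> (s!j<s!k \<longleftrightarrow> b<c)
      \<and> (s!j<s!l \<longleftrightarrow> b<d) \<and> (s!k<s!l \<longleftrightarrow> c<d)"
  then obtain i j k l where h: "i<j" "j<k" "k<l" "l<length s" "(s!i<s!j \<longleftrightarrow> a<b)"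
      "(s!i<s!k \<longleftrightarrow> a<c)" "(s!i<s!l \<longleftrightarrow> a<d)" "(s!j<s!k \<longleftrightarrow> b<c)"
      "(s!j<s!l \<longleftrightarrow> b<d)" "(s!k<s!l \<longleftrightarrow> c<d)" by blast
  define idx where "idx = (\<lambda>t::nat. if t=0 then i else if t=1 then j else if t=2 then k else l)"
  have c: "\<And>j l::nat. j<l \<Longrightarrow> l< 4 \<Longrightarrow> (j=0\<and>l=1) \<or> (j=0\<and>l=2) \<or> (j=0\<and>l=3)
      \<or> (j=1\<and>l=2) \<or> (j=1\<and>l=3) \<or> (j=2\<and>l=3)" by arith
  have c1: "\<And>j::nat. j < 4 \<Longrightarrow> j=0 \<or> j=1 \<or> j=2 \<or> j=3" by arith
  show "contains s [a,b,c,d]" unfolding contains_def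
    apply (rule exI[of _ idx])
    using h c c1 by (auto simp: idx_def numeral_eq_Suc)
qed

lemma contains_len2: "contains s p \<Longrightarrow> 2 \<le> length p \<Longrightarrow> 2 \<le> length s"
  unfolding contains_def by (metis One_nat_def Suc_1 Suc_le_lessD le_less_trans lessI less_2_cases_iff linorder_not_less not_less_eq_eq)

lemma contains_Cons: "contains t p \<Longrightarrow> contains (x#t) p"
  unfolding contains_def
  apply (elim exE)
  subgoal for idx by (rule exI[of _ "\<lambda>j. Suc (idx j)"]) auto
  done

lemma contains_Cons_max:
  assumes c: "contains (x#t) p" and l: "0 < l" "l < length p" "p!0 < p!l"
    and mx: "\<forall>y\<in>set t. y < x"
  shows "contains t p"
proof -
  obtain idx where H1: "\<forall>j<length p. idx j < length (x#t)"
    and H2: "\<forall>j l. j<l \<and> l<length p \<longrightarrow> idx j < idx l"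
    and H3: "\<forall>j l. j < l \<and> l < length p \<longrightarrow> ((x#t)!idx j < (x#t)!idx l \<longleftrightarrow> p!j < p!l)"
    using c unfolding contains_def by blast
  have i01: "idx 0 < idx l" using H2 l by auto
  have "idx 0 \<noteq> 0"
  proof
    assume z: "idx 0 = 0"
    have "(x#t)!idx 0 < (x#t)!idx l" using H3 l by auto
    moreover have "(x#t)!idx l = t!(idx l - 1)" using i01 z by (simp add: nth_Cons')
    moreover have "idx l - 1 < length t" using H1[rule_format, of l] l i01 z by auto
    ultimately show False using z mx nth_mem by fastforce
  qed
  hence pos: "\<forall>j<length p. idx j \<noteq> 0" using H2 by (metis gr0I not_less0)
  show ?thesis unfolding contains_def
    apply (rule exI[of _ "\<lambda>j. idx j - 1"])
    using H1 H2 H3 pos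
    by (auto simp: nth_Cons' less_diff_conv2 Suc_leI) 
qed

lemma rank_lower:
  assumes d: "distinct s" and st: "set s = {1..n}" and k: "k < length s"
    and T: "\<And>t. t < length s \<Longrightarrow> (s!t < s!k \<longleftrightarrow> t \<in> T)" and Tsub: "T \<subseteq> {..<length s}"
  shows "s!k = card T + 1"
proof -
  have img: "(\<lambda>t. s!t) ` T = {1..<s!k}"
  proof
    show "(\<lambda>t. s!t) ` T \<subseteq> {1..<s!k}"
    proof
      fix v assume "v \<in> (\<lambda>t. s!t) ` T"
      then obtain t where t: "t \<in> T" "v = s!t" by blast
      have "t < length s" using t Tsub by auto
      hence "s!t \<in> {1..n}" using st nth_mem by blast
      thus "v \<in> {1..<s!k}" using T t \<open>t < length s\<close> by auto
    qed
    show "{1..<s!k} \<subseteq> (\<lambda>t. s!t) ` T"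
    proof
      fix v assume v: "v \<in> {1..<s!k}"
      have "s!k \<in> {1..n}" using k st nth_mem by blast
      hence "v \<in> set s" using v st by auto
      then obtain t where "t < length s" "s!t = v" by (auto simp: in_set_conv_nth)
      thus "v \<in> (\<lambda>t. s!t) ` T" using T v by auto
    qed
  qed
  have "inj_on (\<lambda>t. s!t) T" unfolding inj_on_def using d Tsub nth_eq_iff_index_eq by (metis lessThan_iff subsetD)
  hence "card T = card {1..<s!k}" using img card_image by fastforce
  moreover have "s!k \<in> {1..n}" using k st nth_mem by blast
  ultimately show ?thesis by simp
qed

lemma rank_upper:
  assumes d: "distinct s" and st: "set s = {1..n}" and k: "k < length s"
    and T: "\<And>t. t < length s \<Longrightarrow> (s!k < s!t \<longleftrightarrow> t \<in> T)" and Tsub: "T \<subseteq> {..<length s}"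
  shows "n - s!k = card T"
proof -
  have img: "(\<lambda>t. s!t) ` T = {s!k<..n}"
  proof
    show "(\<lambda>t. s!t) ` T \<subseteq> {s!k<..n}"
    proof
      fix v assume "v \<in> (\<lambda>t. s!t) ` T"
      then obtain t where t: "t \<in> T" "v = s!t" by blast
      have "t < length s" using t Tsub by auto
      hence "s!t \<in> {1..n}" using st nth_mem by blast
      thus "v \<in> {s!k<..n}" using T t \<open>t < length s\<close> by auto
    qed
    show "{s!k<..n} \<subseteq> (\<lambda>t. s!t) ` T"
    proof
      fix v assume v: "v \<in> {s!k<..n}"
      have "s!k \<in> {1..n}" using k st nth_mem by blast
      hence "v \<in> set s" using v st by auto
      then obtain t where "t < length s" "s!t = v" by (auto simp: in_set_conv_nth)
      thus "v \<in> (\<lambda>t. s!t) ` T" using T v by auto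
    qed
  qed
  have "inj_on (\<lambda>t. s!t) T" unfolding inj_on_def using d Tsub nth_eq_iff_index_eq by (metis lessThan_iff subsetD)
  hence "card T = card {s!k<..n}" using img card_image by fastforce
  thus ?thesis by simp
qed



definition g1 :: "nat \<Rightarrow> nat \<Rightarrow> nat list" where
  "g1 n p = map (\<lambda>i. if i<p then n-1-i else if i=p then n else i-p) [0..<n]"

lemma char1:
  assumes n: "2 \<le> n" and d: "distinct s" and st: "set s = {1..n}"
    and a1: "avoids s [1,2,3]" and a2: "avoids s [1,3,2]" and a3: "avoids s [3,4,2,1]"
    and h0: "s!0 \<noteq> n"
  shows "\<exists>p. max 1 (n-3) \<le> p \<and> p < n \<and> s = g1 n p"
proof -
  have len: "length s = n" using distinct_card[OF d] st by simp
  have A123: "\<And>i j k. i<j \<Longrightarrow> j<k \<Longrightarrow> k<n \<Longrightarrow> \<not>(s!i<s!j \<and> s!j<s!k)"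
    using a1 len by (auto simp: avoids_def contains3) (meson order.strict_trans)
  have A132: "\<And>i j k. i<j \<Longrightarrow> j<k \<Longrightarrow> k<n \<Longrightarrow> \<not>(s!i<s!j \<and> s!i<s!k \<and> \<not> s!j<s!k)"
    using a2 len by (auto simp: avoids_def contains3)
  have A3421: "\<And>i j k l. i<j \<Longrightarrow> j<k \<Longrightarrow> k<l \<Longrightarrow> l<n \<Longrightarrow>
     \<not>(s!i<s!j \<and> \<not>s!i<s!k \<and> \<not>s!i<s!l \<and> \<not>s!j<s!k \<and> \<not>s!j<s!l \<and> \<not>s!k<s!l)"
    using a3 len by (auto simp: avoids_def contains4)
  have vals: "\<And>i. i<n \<Longrightarrow> 1 \<le> s!i \<and> s!i \<le> n" using st len nth_mem
    by (metis atLeastAtMost_iff)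
  have inj: "\<And>i j. i<n \<Longrightarrow> j<n \<Longrightarrow> s!i = s!j \<longleftrightarrow> i = j"
    using d len nth_eq_iff_index_eq by metis
  have surj: "\<And>v. 1 \<le> v \<Longrightarrow> v \<le> n \<Longrightarrow> \<exists>i<n. s!i = v"
    using st len by (metis atLeastAtMost_iff in_set_conv_nth)
  have n0: "0 < n" using n by simp
  have s0: "s!0 = n-1"
  proof -
    have "\<not> s!0 < n-1"
    proof
      assume lt: "s!0 < n-1"
      obtain i1 where i1: "i1<n" "s!i1 = n-1" proof -
        have "1 \<le> n-1" "n-1 \<le> n" using n by auto
        thus ?thesis using surj that by blast
      qed
      obtain i2 where i2: "i2<n" "s!i2 = n" using surj[of n] n by auto
      have "i1 \<noteq> 0" using i1(2) lt by (metis less_irrefl)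
      have "i2 \<noteq> 0" using i2(2) h0 by metis
      have "i1 \<noteq> i2" using i1(2) i2(2) n by auto
      show False
      proof (cases "i1 < i2")
        case True
        thus False using A123[of 0 i1 i2] i1 i2 lt \<open>i1\<noteq>0\<close> by auto
      next
        case False
        hence "i2 < i1" using \<open>i1 \<noteq> i2\<close> by auto
        thus False using A132[of 0 i2 i1] i1 i2 lt \<open>i2\<noteq>0\<close> by auto
      qed
    qed
    thus ?thesis using vals[OF n0] h0 by auto
  qed
  obtain p where p: "p<n" "s!p = n" using surj[of n] n by auto
  have p0: "p \<noteq> 0" using p(2) h0 by metis
  have lessn: "\<And>i. i<n \<Longrightarrow> i \<noteq> p \<Longrightarrow> s!i < n" using vals inj p by (metis le_neq_implies_less)
  have dec: "\<And>i j. i<j \<Longrightarrow> j<p \<Longrightarrow> s!j < s!i"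
  proof -
    fix i j assume ij: "i<j" "j<p"
    have "s!j < n" using lessn ij p by auto
    moreover have "s!i \<noteq> s!j" using inj ij p by auto
    ultimately show "s!j < s!i" using A123[of i j p] ij p by auto
  qed
  have cross: "\<And>i q. i<p \<Longrightarrow> p<q \<Longrightarrow> q<n \<Longrightarrow> s!q < s!i"
  proof -
    fix i q assume iq: "i<p" "p<q" "q<n"
    have "s!i < n" using lessn iq p by auto
    moreover have "s!i \<noteq> s!q" using inj iq p by auto
    moreover have "s!q \<le> n" using vals iq by auto
    ultimately show "s!q < s!i" using A132[of i p q] iq p by auto
  qed
  have inc: "\<And>q r. p<q \<Longrightarrow> q<r \<Longrightarrow> r<n \<Longrightarrow> s!q < s!r"
  proof -
    fix q r assume qr: "p<q" "q<r" "r<n"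
    have "s!q < s!0" "s!r < s!0" using cross[of 0 q] cross[of 0 r] qr p0 by auto
    moreover have "s!q \<le> n" "s!r \<le> n" using vals qr by auto
    moreover have "s!q \<noteq> s!r" using inj qr by auto
    ultimately show "s!q < s!r" using A3421[of 0 p q r] qr p0 p s0 n by auto
  qed
  have pbig: "n - 3 \<le> p"
  proof (rule ccontr)
    assume "\<not> n - 3 \<le> p"
    hence "p+3 < n" by auto
    thus False using A123[of "p+1" "p+2" "p+3"] inc[of "p+1" "p+2"] inc[of "p+2" "p+3"] by auto
  qed
  have after: "\<And>q. p<q \<Longrightarrow> q<n \<Longrightarrow> s!q = q - p"
  proof -
    fix q assume q: "p<q" "q<n"
    have "s!q = card {p<..<q} + 1"
    proof (rule rank_lower[OF d st])
      show "q < length s" using q len by simp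
      show "{p<..<q} \<subseteq> {..<length s}" using q len by auto
      fix t assume t: "t < length s"
      show "s!t < s!q \<longleftrightarrow> t \<in> {p<..<q}"
      proof (cases "t < p")
        case True thus ?thesis using cross[of t q] q by auto
      next
        case False
        then consider "t = p" | "p<t \<and> t<q" | "t = q" | "q < t" by linarith
        thus ?thesis
        proof cases
          case 1 thus ?thesis using p vals[of q] q by auto
        next
          case 2 thus ?thesis using inc[of t q] q by auto
        next
          case 3 thus ?thesis by auto
        next
          case 4 thus ?thesis using inc[of q t] q t len by auto
        qed
      qed
    qed
    thus "s!q = q - p" using q by simp
  qed
  have before: "\<And>i. i<p \<Longrightarrow> s!i = n - 1 - i"
  proof -
    fix i assume i: "i<p"
    have "n - s!i = card ({..<i} \<union> {p})"
    proof (rule rank_upper[OF d st])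
      show "i < length s" using i p len by simp
      show "{..<i} \<union> {p} \<subseteq> {..<length s}" using i p len by auto
      fix t assume t: "t < length s"
      show "s!i < s!t \<longleftrightarrow> t \<in> {..<i} \<union> {p}"
      proof (cases "t < i")
        case True thus ?thesis using dec[of t i] i by auto
      next
        case False
        then consider "t = i" | "i<t \<and> t<p" | "t = p" | "p < t" by linarith
        thus ?thesis
        proof cases
          case 1 thus ?thesis using i by auto
        next
          case 2 thus ?thesis using dec[of i t] by auto
        next
          case 3 thus ?thesis using p lessn[of i] i by auto
        next
          case 4 thus ?thesis using cross[of i t] i t len by auto
        qed
      qed
    qed
    moreover have "i \<notin> {..<i}" "p \<notin> {..<i}" using i by auto
    ultimately have "n - s!i = i + 1" by simp
    thus "s!i = n - 1 - i" using vals[of i] i p by auto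
  qed
  have "s = g1 n p"
  proof (rule nth_equalityI)
    show "length s = length (g1 n p)" using len by (simp add: g1_def)
    fix i assume "i < length s"
    hence i: "i < n" using len by simp
    show "s!i = g1 n p ! i"
      using i before[of i] after[of i] p by (auto simp: g1_def)
  qed
  moreover have "max 1 (n-3) \<le> p" using pbig p0 by simp
  ultimately show ?thesis using p(1) by blast
qed



definition g2 :: "nat \<Rightarrow> nat \<Rightarrow> nat list" where
  "g2 n a = map (\<lambda>i. if i=0 then a else if i \<le> n-a then n+1-i else i-(n-a)) [0..<n]"

lemma char2:
  assumes n: "2 \<le> n" and d: "distinct s" and st: "set s = {1..n}"
    and a1: "avoids s [1,2,3]" and a2: "avoids s [2,1,3]" and a3: "avoids s [3,4,2,1]"
    and h0: "s!0 \<noteq> n"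
  shows "\<exists>a. 1 \<le> a \<and> a \<le> min 3 (n-1) \<and> s = g2 n a"
proof -
  have len: "length s = n" using distinct_card[OF d] st by simp
  have A123: "\<And>i j k. i<j \<Longrightarrow> j<k \<Longrightarrow> k<n \<Longrightarrow> \<not>(s!i<s!j \<and> s!j<s!k)"
    using a1 len by (auto simp: avoids_def contains3) (meson order.strict_trans)
  have A213: "\<And>i j k. i<j \<Longrightarrow> j<k \<Longrightarrow> k<n \<Longrightarrow> \<not>(\<not> s!i<s!j \<and> s!i<s!k \<and> s!j<s!k)"
    using a2 len by (auto simp: avoids_def contains3)
  have A3421: "\<And>i j k l. i<j \<Longrightarrow> j<k \<Longrightarrow> k<l \<Longrightarrow> l<n \<Longrightarrow>
     \<not>(s!i<s!j \<and> \<not>s!i<s!k \<and> \<not>s!i<s!l \<and> \<not>s!j<s!k \<and> \<not>s!j<s!l \<and> \<not>s!k<s!l)"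
    using a3 len by (auto simp: avoids_def contains4)
  have nb: "\<And>i j k. i<j \<Longrightarrow> j<k \<Longrightarrow> k<n \<Longrightarrow> \<not>(s!i<s!k \<and> s!j<s!k)"
    using A123 A213 by blast
  have vals: "\<And>i. i<n \<Longrightarrow> 1 \<le> s!i \<and> s!i \<le> n" using st len nth_mem
    by (metis atLeastAtMost_iff)
  have inj: "\<And>i j. i<n \<Longrightarrow> j<n \<Longrightarrow> s!i = s!j \<longleftrightarrow> i = j"
    using d len nth_eq_iff_index_eq by metis
  have surj: "\<And>v. 1 \<le> v \<Longrightarrow> v \<le> n \<Longrightarrow> \<exists>i<n. s!i = v"
    using st len by (metis atLeastAtMost_iff in_set_conv_nth)
  have n0: "0 < n" using n by simp
  define a where "a = s!0"
  have a1n: "1 \<le> a" "a < n" using vals[OF n0] h0 unfolding a_def by auto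
  obtain p where p: "p<n" "s!p = n" using surj[of n] n by auto
  have p0: "p \<noteq> 0" using p(2) h0 by metis
  have lessn: "\<And>i. i<n \<Longrightarrow> i \<noteq> p \<Longrightarrow> s!i < n" using vals inj p by (metis le_neq_implies_less)
  have p1: "p = 1"
  proof (rule ccontr)
    assume "p \<noteq> 1"
    hence "1 < p" using p0 by simp
    thus False using nb[of 0 1 p] lessn[of 0] lessn[of 1] p by auto
  qed
  have s1: "s!1 = n" using p p1 by simp
  have B1: "\<And>j k. 2 \<le> j \<Longrightarrow> j<k \<Longrightarrow> k<n \<Longrightarrow> a < s!k \<Longrightarrow> s!k < s!j"
  proof -
    fix j k assume jk: "2 \<le> j" "j<k" "k<n" "a < s!k"
    have "s!j \<noteq> s!k" using inj jk by auto
    thus "s!k < s!j" using nb[of 0 j k] jk unfolding a_def by auto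
  qed
  have B2: "\<And>k l. 2 \<le> k \<Longrightarrow> k<l \<Longrightarrow> l<n \<Longrightarrow> s!k < a \<Longrightarrow> s!l < a \<Longrightarrow> s!k < s!l"
  proof -
    fix k l assume kl: "2 \<le> k" "k<l" "l<n" "s!k < a" "s!l < a"
    show "s!k < s!l" using A3421[of 0 1 k l] kl s1 a1n unfolding a_def by auto
  qed
  have big: "\<And>k. 2 \<le> k \<Longrightarrow> k<n \<Longrightarrow> a < s!k \<Longrightarrow> s!k = n+1-k"
  proof -
    fix k assume k: "2 \<le> k" "k<n" "a < s!k"
    have "n - s!k = card {1..<k}"
    proof (rule rank_upper[OF d st])
      show "k < length s" using k len by simp
      show "{1..<k} \<subseteq> {..<length s}" using k len by auto
      fix t assume t: "t < length s"
      show "s!k < s!t \<longleftrightarrow> t \<in> {1..<k}"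
      proof (cases "t < k")
        case True
        then consider "t = 0" | "t = 1" | "2 \<le> t" by linarith
        thus ?thesis
        proof cases
          case 1 thus ?thesis using k unfolding a_def by auto
        next
          case 2 thus ?thesis using k s1 lessn[of k] p1 by auto
        next
          case 3 thus ?thesis using B1[of t k] k True by auto
        qed
      next
        case False
        show ?thesis
        proof (cases "t = k")
          case True thus ?thesis by auto
        next
          case False
          hence "k < t" using \<open>\<not> t < k\<close> by simp
          thus ?thesis using B1[of k t] k t len by auto
        qed
      qed
    qed
    thus "s!k = n+1-k" using k vals[of k] by auto
  qed
  define m where "m = n - a"
  have m1: "1 \<le> m" using a1n unfolding m_def by simp
  have upper: "\<And>k. 1 \<le> k \<Longrightarrow> k \<le> m \<Longrightarrow> s!k = n+1-k"
  proof -
    fix k assume k: "1 \<le> k" "k \<le> m"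
    show "s!k = n+1-k"
    proof (cases "k = 1")
      case True thus ?thesis using s1 by simp
    next
      case False
      have v: "1 \<le> n+1-k" "n+1-k \<le> n" using k a1n unfolding m_def by auto
      then obtain t where t: "t<n" "s!t = n+1-k" using surj by blast
      have "t \<noteq> 0"
      proof
        assume "t = 0" hence "a = n+1-k" using t unfolding a_def by simp
        thus False using k a1n unfolding m_def by simp
      qed
      moreover have "t \<noteq> 1" using t s1 k False by auto
      moreover have "a < s!t" using t k unfolding m_def by auto
      ultimately have "s!t = n+1-t" using big[of t] t by auto
      hence "t = k" using t k m1 unfolding m_def by auto
      thus ?thesis using t by simp
    qed
  qed
  have lower: "\<And>k. m < k \<Longrightarrow> k < n \<Longrightarrow> s!k < a"
  proof -
    fix k assume k: "m < k" "k < n"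
    have "s!k \<noteq> a" using inj[of k 0] k m1 unfolding a_def by auto
    moreover have "\<not> a < s!k"
    proof
      assume "a < s!k"
      hence "s!k = n+1-k" using big[of k] k m1 by auto
      thus False using \<open>a < s!k\<close> k unfolding m_def by auto
    qed
    ultimately show "s!k < a" by auto
  qed
  have lowval: "\<And>k. m < k \<Longrightarrow> k < n \<Longrightarrow> s!k = k - m"
  proof -
    fix k assume k: "m < k" "k < n"
    have "s!k = card {m<..<k} + 1"
    proof (rule rank_lower[OF d st])
      show "k < length s" using k len by simp
      show "{m<..<k} \<subseteq> {..<length s}" using k len by auto
      fix t assume t: "t < length s"
      show "s!t < s!k \<longleftrightarrow> t \<in> {m<..<k}"
      proof (cases "t \<le> m")
        case True
        then consider "t = 0" | "1 \<le> t \<and> t \<le> m" by linarith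
        thus ?thesis
        proof cases
          case 1 thus ?thesis using lower[of k] k unfolding a_def by auto
        next
          case 2 thus ?thesis using upper[of t] lower[of k] k unfolding m_def by auto
        qed
      next
        case False
        then consider "t < k" | "t = k" | "k < t" by linarith
        thus ?thesis
        proof cases
          case 1 thus ?thesis using B2[of t k] lower[of t] lower[of k] k False m1 by auto
        next
          case 2 thus ?thesis by auto
        next
          case 3 thus ?thesis using B2[of k t] lower[of t] lower[of k] k t len m1 by auto
        qed
      qed
    qed
    thus "s!k = k - m" using k by simp
  qed
  have a3: "a \<le> 3"
  proof (rule ccontr)
    assume "\<not> a \<le> 3"
    hence "m+3 < n" using a1n unfolding m_def by auto
    thus False using A123[of "m+1" "m+2" "m+3"] lowval[of "m+1"] lowval[of "m+2"] lowval[of "m+3"] by auto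
  qed
  have "s = g2 n a"
  proof (rule nth_equalityI)
    show "length s = length (g2 n a)" using len by (simp add: g2_def)
    fix i assume "i < length s"
    hence i: "i < n" using len by simp
    show "s!i = g2 n a ! i"
    proof (cases "i = 0")
      case True thus ?thesis using i unfolding a_def g2_def by simp
    next
      case False
      thus ?thesis using i upper[of i] lowval[of i] unfolding g2_def m_def by auto
    qed
  qed
  moreover have "a \<le> min 3 (n-1)" using a3 a1n by simp
  ultimately show ?thesis using a1n by blast
qed



lemma g1_props:
  assumes n: "2 \<le> n" and p: "max 1 (n-3) \<le> p" "p < n"
  shows "distinct (g1 n p)" "set (g1 n p) = {1..n}" "avoids (g1 n p) [1,2,3]"
    "avoids (g1 n p) [1,3,2]" "avoids (g1 n p) [3,4,2,1]"
proof -
  let ?f = "\<lambda>i. if i<p then n-1-i else if i=p then n else i-p"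
  have "inj_on ?f {0..<n}" using p by (auto simp: inj_on_def split: if_splits)
  thus "distinct (g1 n p)" unfolding g1_def by (simp add: distinct_map)
  have "?f ` {0..<n} = {1..n}"
  proof
    show "?f ` {0..<n} \<subseteq> {1..n}" using p by auto
    show "{1..n} \<subseteq> ?f ` {0..<n}"
    proof
      fix v assume v: "v \<in> {1..n}"
      have "v \<le> n" using v by simp
      then consider "v = n" | "n - p \<le> v \<and> v < n" | "v < n - p" by linarith
      thus "v \<in> ?f ` {0..<n}"
      proof cases
        case 1 thus ?thesis using p by (intro image_eqI[of _ _ p]) auto
      next
        case 2 thus ?thesis using p by (intro image_eqI[of _ _ "n-1-v"]) auto
      next
        case 3 thus ?thesis using p v by (intro image_eqI[of _ _ "v+p"]) auto
      qed
    qed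
  qed
  thus "set (g1 n p) = {1..n}" unfolding g1_def by simp
  show "avoids (g1 n p) [1,2,3]" unfolding avoids_def contains3 g1_def
    using p by (auto split: if_splits)
  show "avoids (g1 n p) [1,3,2]" unfolding avoids_def contains3 g1_def
    using p by (auto split: if_splits)
  show "avoids (g1 n p) [3,4,2,1]" unfolding avoids_def contains4 g1_def
    using p by (auto split: if_splits)
qed

lemma g2_props:
  assumes n: "2 \<le> n" and a: "1 \<le> a" "a \<le> min 3 (n-1)"
  shows "distinct (g2 n a)" "set (g2 n a) = {1..n}" "avoids (g2 n a) [1,2,3]"
    "avoids (g2 n a) [2,1,3]" "avoids (g2 n a) [3,4,2,1]"
proof -
  let ?f = "\<lambda>i. if i=0 then a else if i \<le> n-a then n+1-i else i-(n-a)"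
  have "inj_on ?f {0..<n}" using a by (auto simp: inj_on_def split: if_splits)
  thus "distinct (g2 n a)" unfolding g2_def by (simp add: distinct_map)
  have "?f ` {0..<n} = {1..n}"
  proof
    show "?f ` {0..<n} \<subseteq> {1..n}" using a by auto
    show "{1..n} \<subseteq> ?f ` {0..<n}"
    proof
      fix v assume v: "v \<in> {1..n}"
      consider "v = a" | "a < v" | "v < a" by linarith
      thus "v \<in> ?f ` {0..<n}"
      proof cases
        case 1 thus ?thesis using a n by (intro image_eqI[of _ _ 0]) auto
      next
        case 2 thus ?thesis using a v by (intro image_eqI[of _ _ "n+1-v"]) auto
      next
        case 3 thus ?thesis using a v by (intro image_eqI[of _ _ "v+(n-a)"]) auto
      qed
    qed
  qed
  thus "set (g2 n a) = {1..n}" unfolding g2_def by simp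
  show "avoids (g2 n a) [1,2,3]" unfolding avoids_def contains3 g2_def
    using a by (auto split: if_splits)
  show "avoids (g2 n a) [2,1,3]" unfolding avoids_def contains3 g2_def
    using a by (auto split: if_splits)
  show "avoids (g2 n a) [3,4,2,1]" unfolding avoids_def contains4 g2_def
    using a by (auto split: if_splits)
qed



lemma memAv: "s \<in> Av n pats \<longleftrightarrow> distinct s \<and> set s = {1..n} \<and> (\<forall>p\<in>set pats. avoids s p)"
  by (simp add: Av_def perms_def)

lemma finite_Av: "finite (Av n pats)"
proof (rule finite_subset)
  show "Av n pats \<subseteq> {xs. set xs \<subseteq> {1..n} \<and> length xs = n}"
    using distinct_card by (fastforce simp: memAv)
  show "finite {xs. set xs \<subseteq> {1..n} \<and> length xs = n}" by (rule finite_lists_length_eq) simp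
qed

lemma Av_one:
  assumes pl: "\<forall>p\<in>set pats. 2 \<le> length p"
  shows "Av 1 pats = {[1]}"
proof
  show "Av 1 pats \<subseteq> {[1]}"
  proof
    fix s assume "s \<in> Av 1 pats"
    hence d: "distinct s" and st: "set s = {1}" by (auto simp: memAv)
    hence "length s = 1" using distinct_card[OF d] by simp
    then obtain x where "s = [x]" by (metis One_nat_def length_0_conv length_Suc_conv)
    thus "s \<in> {[1]}" using st by simp
  qed
  show "{[1]} \<subseteq> Av 1 pats"
    using pl contains_len2 by (fastforce simp: memAv avoids_def)
qed

lemma Cons_in:
  assumes n: "2 \<le> n" and t: "t \<in> Av (n-1) pats"
    and pl: "\<forall>p\<in>set pats. \<exists>l. 0 < l \<and> l < length p \<and> p!0 < p!l"
  shows "n # t \<in> Av n pats"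
proof -
  have d: "distinct t" and st: "set t = {1..n-1}" and av: "\<forall>p\<in>set pats. avoids t p"
    using t by (auto simp: memAv)
  have "n \<notin> set t" using st n by auto
  moreover have "insert n {1..n-1} = {1..n}" using n by auto
  moreover have "\<forall>y\<in>set t. y < n" using st n by auto
  moreover have "\<forall>p\<in>set pats. avoids (n#t) p"
  proof
    fix p assume "p \<in> set pats"
    then obtain l where "0 < l" "l < length p" "p!0 < p!l" using pl by blast
    thus "avoids (n#t) p" using av \<open>p \<in> set pats\<close> contains_Cons_max \<open>\<forall>y\<in>set t. y < n\<close>
      unfolding avoids_def by blast
  qed
  ultimately show ?thesis using d st by (auto simp: memAv)
qed

lemma Cons_out:
  assumes x: "x # t \<in> Av n pats" and xn: "x = n"
  shows "t \<in> Av (n-1) pats"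
proof -
  have d: "distinct (x#t)" and st: "set (x#t) = {1..n}" and av: "\<forall>p\<in>set pats. avoids (x#t) p"
    using x by (auto simp: memAv)
  have "set t = {1..n} - {n}" using d st xn by auto
  also have "\<dots> = {1..n-1}" by auto
  finally show ?thesis using d av contains_Cons by (auto simp: memAv avoids_def)
qed

definition A1 where "A1 n = Av n [[1,2,3],[1,3,2],[3,4,2,1]]"
definition A2 where "A2 n = Av n [[1,2,3],[2,1,3],[3,4,2,1]]"

lemma rec1:
  assumes n: "2 \<le> n"
  shows "A1 n = Cons n ` A1 (n-1) \<union> g1 n ` {max 1 (n-3)..<n}"
proof
  show "A1 n \<subseteq> Cons n ` A1 (n-1) \<union> g1 n ` {max 1 (n-3)..<n}"
  proof
    fix s assume s: "s \<in> A1 n"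
    hence d: "distinct s" and st: "set s = {1..n}" by (auto simp: A1_def memAv)
    have "length s = n" using distinct_card[OF d] st by simp
    hence "s \<noteq> []" using n by auto
    then obtain x t where xt: "s = x # t" by (meson list.exhaust)
    show "s \<in> Cons n ` A1 (n-1) \<union> g1 n ` {max 1 (n-3)..<n}"
    proof (cases "x = n")
      case True
      hence "t \<in> A1 (n-1)" using Cons_out s xt unfolding A1_def by blast
      thus ?thesis using xt True by blast
    next
      case False
      have "\<exists>p. max 1 (n-3) \<le> p \<and> p < n \<and> s = g1 n p"
        by (rule char1[OF n d st]) (use s xt False in \<open>auto simp: A1_def memAv\<close>)
      thus ?thesis by auto
    qed
  qed
  show "Cons n ` A1 (n-1) \<union> g1 n ` {max 1 (n-3)..<n} \<subseteq> A1 n"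
  proof -
    have "Cons n ` A1 (n-1) \<subseteq> A1 n"
    proof
      fix s assume "s \<in> Cons n ` A1 (n-1)"
      then obtain t where "t \<in> A1 (n-1)" "s = n # t" by blast
      moreover have "\<forall>p\<in>set [[1,2,3],[1,3,2],[3,4,2,1::nat]]. \<exists>l. 0 < l \<and> l < length p \<and> p!0 < p!l"
        by (auto intro: exI[of _ 1] exI[of _ 2])
      ultimately show "s \<in> A1 n" using Cons_in[OF n] unfolding A1_def by blast
    qed
    moreover have "g1 n ` {max 1 (n-3)..<n} \<subseteq> A1 n"
      using g1_props[OF n] unfolding A1_def by (auto simp: memAv)
    ultimately show ?thesis by blast
  qed
qed

lemma rec2:
  assumes n: "2 \<le> n"
  shows "A2 n = Cons n ` A2 (n-1) \<union> g2 n ` {1..min 3 (n-1)}"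
proof
  show "A2 n \<subseteq> Cons n ` A2 (n-1) \<union> g2 n ` {1..min 3 (n-1)}"
  proof
    fix s assume s: "s \<in> A2 n"
    hence d: "distinct s" and st: "set s = {1..n}" by (auto simp: A2_def memAv)
    have "length s = n" using distinct_card[OF d] st by simp
    hence "s \<noteq> []" using n by auto
    then obtain x t where xt: "s = x # t" by (meson list.exhaust)
    show "s \<in> Cons n ` A2 (n-1) \<union> g2 n ` {1..min 3 (n-1)}"
    proof (cases "x = n")
      case True
      hence "t \<in> A2 (n-1)" using Cons_out s xt unfolding A2_def by blast
      thus ?thesis using xt True by blast
    next
      case False
      have "\<exists>a. 1 \<le> a \<and> a \<le> min 3 (n-1) \<and> s = g2 n a"
        by (rule char2[OF n d st]) (use s xt False in \<open>auto simp: A2_def memAv\<close>)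
      thus ?thesis by auto
    qed
  qed
  show "Cons n ` A2 (n-1) \<union> g2 n ` {1..min 3 (n-1)} \<subseteq> A2 n"
  proof -
    have "Cons n ` A2 (n-1) \<subseteq> A2 n"
    proof
      fix s assume "s \<in> Cons n ` A2 (n-1)"
      then obtain t where "t \<in> A2 (n-1)" "s = n # t" by blast
      moreover have "\<forall>p\<in>set [[1,2,3],[2,1,3],[3,4,2,1::nat]]. \<exists>l. 0 < l \<and> l < length p \<and> p!0 < p!l"
        by (auto intro: exI[of _ 1] exI[of _ 2])
      ultimately show "s \<in> A2 n" using Cons_in[OF n] unfolding A2_def by blast
    qed
    moreover have "g2 n ` {1..min 3 (n-1)} \<subseteq> A2 n"
      using g2_props[OF n] unfolding A2_def by (auto simp: memAv)
    ultimately show ?thesis by blast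
  qed
qed

lemma card1:
  assumes n: "2 \<le> n"
  shows "card (A1 n) = card (A1 (n-1)) + min 3 (n-1)"
proof -
  have inj: "inj_on (g1 n) {max 1 (n-3)..<n}"
  proof (rule inj_onI)
    fix p q assume p: "p \<in> {max 1 (n-3)..<n}" and q: "q \<in> {max 1 (n-3)..<n}" and e: "g1 n p = g1 n q"
    have "g1 n p ! p = g1 n q ! p" using e by simp
    thus "p = q" using p q n by (auto simp: g1_def split: if_splits)
  qed
  have disj: "Cons n ` A1 (n-1) \<inter> g1 n ` {max 1 (n-3)..<n} = {}"
  proof -
    have "\<And>p. p \<in> {max 1 (n-3)..<n} \<Longrightarrow> g1 n p ! 0 \<noteq> n" using n by (auto simp: g1_def)
    hence "\<And>t p. p \<in> {max 1 (n-3)..<n} \<Longrightarrow> n # t \<noteq> g1 n p" by (metis nth_Cons_0)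
    thus ?thesis by blast
  qed
  have "card (A1 n) = card (Cons n ` A1 (n-1)) + card (g1 n ` {max 1 (n-3)..<n})"
    unfolding rec1[OF n] using disj finite_Av unfolding A1_def
    by (intro card_Un_disjoint) auto
  also have "\<dots> = card (A1 (n-1)) + card {max 1 (n-3)..<n}"
    using inj by (simp add: card_image)
  also have "card {max 1 (n-3)..<n} = min 3 (n-1)" using n by auto
  finally show ?thesis .
qed

lemma card2:
  assumes n: "2 \<le> n"
  shows "card (A2 n) = card (A2 (n-1)) + min 3 (n-1)"
proof -
  have inj: "inj_on (g2 n) {1..min 3 (n-1)}"
  proof (rule inj_onI)
    fix p q assume p: "p \<in> {1..min 3 (n-1)}" and q: "q \<in> {1..min 3 (n-1)}" and e: "g2 n p = g2 n q"
    have "g2 n p ! 0 = g2 n q ! 0" using e by simp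
    thus "p = q" using p q n by (auto simp: g2_def)
  qed
  have disj: "Cons n ` A2 (n-1) \<inter> g2 n ` {1..min 3 (n-1)} = {}"
  proof -
    have "\<And>p. p \<in> {1..min 3 (n-1)} \<Longrightarrow> g2 n p ! 0 \<noteq> n" using n by (auto simp: g2_def)
    hence "\<And>t p. p \<in> {1..min 3 (n-1)} \<Longrightarrow> n # t \<noteq> g2 n p" by (metis nth_Cons_0)
    thus ?thesis by blast
  qed
  have "card (A2 n) = card (Cons n ` A2 (n-1)) + card (g2 n ` {1..min 3 (n-1)})"
    unfolding rec2[OF n] using disj finite_Av unfolding A2_def
    by (intro card_Un_disjoint) auto
  also have "\<dots> = card (A2 (n-1)) + card {1..min 3 (n-1)}"
    using inj by (simp add: card_image)
  also have "card {1..min 3 (n-1)} = min 3 (n-1)" by simp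
  finally show ?thesis .
qed

lemma count_gen:
  fixes c :: "nat \<Rightarrow> nat"
  assumes c1: "c 1 = 1" and cs: "\<And>n. 2 \<le> n \<Longrightarrow> c n = c (n-1) + min 3 (n-1)" and n: "3 \<le> n"
  shows "c n = 3*n-5"
  using n
proof (induction n rule: nat_induct_at_least)
  case base
  have "c 2 = 2" using cs[of 2] c1 by simp
  thus ?case using cs[of 3] by simp
next
  case (Suc n)
  thus ?case using cs[of "Suc n"] by simp
qed

theorem theorem3p5:
  fixes n :: nat
  assumes "n \<ge> 3"
  shows "card (Av n [[1,2,3],[1,3,2],[3,4,2,1]]) = 3 * n - 5
       \<and> card (Av n [[1,2,3],[2,1,3],[3,4,2,1]]) = 3 * n - 5"
proof
  have "card (A1 1) = 1" unfolding A1_def by (subst Av_one) auto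
  thus "card (Av n [[1,2,3],[1,3,2],[3,4,2,1]]) = 3 * n - 5"
    using count_gen[of "\<lambda>n. card (A1 n)"] card1 assms unfolding A1_def by blast
  have "card (A2 1) = 1" unfolding A2_def by (subst Av_one) auto
  thus "card (Av n [[1,2,3],[2,1,3],[3,4,2,1]]) = 3 * n - 5"
    using count_gen[of "\<lambda>n. card (A2 n)"] card2 assms unfolding A2_def by blast
qed

end
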